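(* Let $\mathcal{S},\mathcal{A}$ be finite, $\gamma\in(0,1)$, $\alpha\in(0,1)$, $\zeta>0$, and consider an MDP with $(\tilde r(s,a),\tilde s')\sim P(\cdot,\cdot\mid s,a)$ and bounded rewards. For $V:\mathcal{S}\to\mathbb{R}$ define the operator $$(\mathcal{T}^*V)(s)=V(s)+\max_a 2\zeta\,\mathbb{E}_{r,s'}\big[(1-\alpha)\big(\delta(s,a,r,s')\big)_-+\alpha\big(\delta(s,a,r,s')\big)_+\big],\qquad \delta(s,a,r,s')=r+\gamma V(s')-V(s),$$ where $(r,s')\sim P(\cdot,\cdot\mid s,a)$. Then the optimal dynamic-expectile value function $V^*$ is the unique solution of $\mathcal{T}^*V=V$.
   Context: $(x)_-=\min(x,0)$, $(x)_+=\max(x,0)$. $\rho=\mathrm{Expectile}_\alpha$, where $\mathrm{Expectile}_\alpha[\tilde x]=\arg\min_y(1-\alpha)\mathbb{E}[(\tilde x-y)_-^2]+\alpha\mathbb{E}[(\tilde x-y)_+^2]$. The optimal action-value function $Q^*$ solves $Q^*(s,a)=\rho\big(\tilde r(s,a)+\gamma\max_{a'}Q^*(\tilde s',a')\big)$ ($\rho$ taken over the joint law of $(\tilde r(s,a),\tilde s')$), and $V^*(s)=\max_aQ^*(s,a)$, so that $V^*(s)=\max_a\rho(\tilde r(s,a)+\gamma V^*(\tilde s'))$. *)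

theory Defs
  imports "HOL-Probability.Probability"
begin

definition neg_part :: "real \<Rightarrow> real" where
  "neg_part x = min x 0"

definition pos_part :: "real \<Rightarrow> real" where
  "pos_part x = max x 0"

definition expectile_loss :: "real \<Rightarrow> 'b measure \<Rightarrow> ('b \<Rightarrow> real) \<Rightarrow> real \<Rightarrow> real" where
  "expectile_loss \<alpha> M X y =
     (1 - \<alpha>) * (\<integral>\<omega>. (neg_part (X \<omega> - y))\<^sup>2 \<partial>M) + \<alpha> * (\<integral>\<omega>. (pos_part (X \<omega> - y))\<^sup>2 \<partial>M)"

text \<open>Expectile_alpha[X] = argmin_y of the expectile loss (the minimiser is unique for
  alpha in (0,1) and bounded X).\<close>

definition expectile :: "real \<Rightarrow> 'b measure \<Rightarrow> ('b \<Rightarrow> real) \<Rightarrow> real" where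
  "expectile \<alpha> M X = (THE y. \<forall>z. expectile_loss \<alpha> M X y \<le> expectile_loss \<alpha> M X z)"

definition Tstar :: "real \<Rightarrow> real \<Rightarrow> real \<Rightarrow> ('s \<Rightarrow> 'a \<Rightarrow> (real \<times> 's) measure)
    \<Rightarrow> ('s \<Rightarrow> real) \<Rightarrow> 's \<Rightarrow> real" where
  "Tstar \<zeta> \<alpha> \<gamma> P V s = V s +
     (MAX a. 2 * \<zeta> * (\<integral>(r, s'). (1 - \<alpha>) * neg_part (r + \<gamma> * V s' - V s)
                                 + \<alpha> * pos_part (r + \<gamma> * V s' - V s) \<partial>(P s a)))"

end

theory Submission
  imports Defs
begin

definition hh :: "real \<Rightarrow> real \<Rightarrow> real" where
  "hh \<alpha> t = (1-\<alpha>)*neg_part t + \<alpha>*pos_part t"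

definition phi :: "real \<Rightarrow> real \<Rightarrow> real" where
  "phi \<alpha> t = (1-\<alpha>)*(neg_part t)\<^sup>2 + \<alpha>*(pos_part t)\<^sup>2"

lemma hh_eq: "hh \<alpha> t = (if t \<le> 0 then (1-\<alpha>)*t else \<alpha>*t)"
  by (simp add: hh_def neg_part_def pos_part_def)

lemma hh_mono: "0 \<le> \<alpha> \<Longrightarrow> \<alpha> \<le> 1 \<Longrightarrow> t \<le> u \<Longrightarrow> hh \<alpha> t \<le> hh \<alpha> u"
proof -
  assume a: "0 \<le> \<alpha>" "\<alpha> \<le> 1" "t \<le> u"
  have 1: "(1-\<alpha>)*t \<le> (1-\<alpha>)*u" "\<alpha>*t \<le> \<alpha>*u" using a by (auto intro: mult_left_mono)
  show ?thesis
  proof (cases "t \<le> 0 \<and> \<not> u \<le> 0")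
    case True
    have "(1-\<alpha>)*t \<le> 0" using a True by (simp add: mult_nonneg_nonpos)
    moreover have "0 \<le> \<alpha>*u" using a True by simp
    ultimately show ?thesis using True by (simp add: hh_eq)
  next
    case False
    then show ?thesis using 1 a by (auto simp: hh_eq)
  qed
qed

lemma hh_shift: "0 \<le> \<alpha> \<Longrightarrow> \<alpha> \<le> 1 \<Longrightarrow> 0 \<le> c \<Longrightarrow> hh \<alpha> t + min \<alpha> (1-\<alpha>) * c \<le> hh \<alpha> (t+c)"
proof -
  assume a: "0 \<le> \<alpha>" "\<alpha> \<le> 1" "0 \<le> c"
  let ?m = "min \<alpha> (1-\<alpha>)"
  have f: "?m * x \<le> \<alpha> * x" "?m * x \<le> (1-\<alpha>) * x" if "0 \<le> x" for x
    using that by (auto intro: mult_right_mono)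
  consider "t + c \<le> 0" | "0 < t" | "t \<le> 0" "0 < t + c" by linarith
  then show ?thesis
  proof cases
    case 1 then show ?thesis using f(2)[OF a(3)] a by (simp add: hh_eq algebra_simps)
  next
    case 2 then show ?thesis using f(1)[OF a(3)] a by (simp add: hh_eq algebra_simps)
  next
    case 3
    have "?m * (t + c) \<le> \<alpha> * (t+c)" "?m * (-t) \<le> (1-\<alpha>) * (-t)" using 3 f(1)[of "t+c"] f(2)[of "-t"] by auto
    then show ?thesis using 3 by (simp add: hh_eq algebra_simps)
  qed
qed

lemma hh_lip: "0 \<le> \<alpha> \<Longrightarrow> \<alpha> \<le> 1 \<Longrightarrow> 0 \<le> c \<Longrightarrow> hh \<alpha> (t+c) \<le> hh \<alpha> t + c"
proof -
  assume a: "0 \<le> \<alpha>" "\<alpha> \<le> 1" "0 \<le> c"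
  have f: "\<alpha> * x \<le> x" "(1-\<alpha>) * x \<le> x" if "0 \<le> x" for x
    using that a by (auto simp: mult_left_le_one_le)
  consider "t + c \<le> 0" | "0 < t" | "t \<le> 0" "0 < t + c" by linarith
  then show ?thesis
  proof cases
    case 1 then show ?thesis using f(2)[OF a(3)] a by (simp add: hh_eq algebra_simps)
  next
    case 2 then show ?thesis using f(1)[OF a(3)] a by (simp add: hh_eq algebra_simps)
  next
    case 3
    have "\<alpha> * (t + c) \<le> (t+c)" "(1-\<alpha>) * (-t) \<le> (-t)" using 3 f(1)[of "t+c"] f(2)[of "-t"] by auto
    then show ?thesis using 3 by (simp add: hh_eq algebra_simps)
  qed
qed

lemma hh_abs: "0 \<le> \<alpha> \<Longrightarrow> \<alpha> \<le> 1 \<Longrightarrow> \<bar>hh \<alpha> t\<bar> \<le> \<bar>t\<bar>"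
proof -
  assume a: "0 \<le> \<alpha>" "\<alpha> \<le> 1"
  have "\<bar>\<alpha> * t\<bar> \<le> \<bar>t\<bar>" "\<bar>(1-\<alpha>) * t\<bar> \<le> \<bar>t\<bar>" using a
    by (auto simp: abs_mult intro!: mult_left_le_one_le)
  then show ?thesis by (cases "t \<le> 0") (simp_all add: hh_eq)
qed

lemma phi_convex:
  assumes "0 \<le> \<alpha>" "\<alpha> \<le> 1"
  shows "phi \<alpha> t - 2*d*hh \<alpha> t + min \<alpha> (1-\<alpha>) * d\<^sup>2 \<le> phi \<alpha> (t - d)"
proof -
  let ?m = "min \<alpha> (1-\<alpha>)"
  consider "t > 0" "t - d > 0" | "t \<le> 0" "t - d \<le> 0" | "t > 0" "t - d \<le> 0" | "t \<le> 0" "t - d > 0" by linarith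
  then show ?thesis
  proof cases
    case 1
    have "?m * d\<^sup>2 \<le> \<alpha> * d\<^sup>2" by (intro mult_right_mono) auto
    then show ?thesis using 1 by (simp add: phi_def hh_def neg_part_def pos_part_def power2_eq_square algebra_simps)
  next
    case 2
    have "?m * d\<^sup>2 \<le> (1-\<alpha>) * d\<^sup>2" by (intro mult_right_mono) auto
    then show ?thesis using 2 by (simp add: phi_def hh_def neg_part_def pos_part_def power2_eq_square algebra_simps)
  next
    case 3
    let ?u = "t - d"
    have "(d - t)\<^sup>2 \<le> d\<^sup>2" using 3 by (intro power_mono) auto
    then have u2: "?u\<^sup>2 \<le> d\<^sup>2" by (simp add: power2_commute)
    have "(\<alpha> - ?m) * d\<^sup>2 \<ge> (2*\<alpha>-1) * ?u\<^sup>2"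
    proof (cases "\<alpha> \<le> 1/2")
      case True
      have "(2*\<alpha>-1) * ?u\<^sup>2 \<le> 0" using True by (simp add: mult_nonpos_nonneg)
      moreover have "(\<alpha> - ?m) * d\<^sup>2 \<ge> 0" by simp
      ultimately show ?thesis by linarith
    next
      case False
      then have "?m = 1 - \<alpha>" by simp
      then show ?thesis using u2 False by (simp add: mult_left_mono)
    qed
    then show ?thesis using 3 by (simp add: phi_def hh_def neg_part_def pos_part_def power2_eq_square algebra_simps)
  next
    case 4
    let ?u = "t - d"
    have "(t - d)\<^sup>2 \<le> (-d)\<^sup>2" using 4 by (intro power_mono) auto
    then have u2: "?u\<^sup>2 \<le> d\<^sup>2" by simp
    have "((1-\<alpha>) - ?m) * d\<^sup>2 \<ge> (1 - 2*\<alpha>) * ?u\<^sup>2"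
    proof (cases "\<alpha> \<ge> 1/2")
      case True
      have "(1-2*\<alpha>) * ?u\<^sup>2 \<le> 0" using True by (simp add: mult_nonpos_nonneg)
      moreover have "((1-\<alpha>) - ?m) * d\<^sup>2 \<ge> 0" by simp
      ultimately show ?thesis by linarith
    next
      case False
      then have "?m = \<alpha>" by simp
      then show ?thesis using u2 False by (simp add: mult_left_mono)
    qed
    then show ?thesis using 4 by (simp add: phi_def hh_def neg_part_def pos_part_def power2_eq_square algebra_simps)
  qed
qed


lemma (in prob_space) int_shift:
  fixes f g :: "'a \<Rightarrow> real"
  assumes "integrable M f" "integrable M g" "\<And>x. f x + c \<le> g x"
  shows "(\<integral>x. f x \<partial>M) + c \<le> (\<integral>x. g x \<partial>M)"
proof -
  have "(\<integral>x. f x + c \<partial>M) = (\<integral>x. f x \<partial>M) + c"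
    using assms(1) by (simp add: integral_add prob_space)
  moreover have "(\<integral>x. f x + c \<partial>M) \<le> (\<integral>x. g x \<partial>M)"
    using assms by (intro integral_mono) auto
  ultimately show ?thesis by simp
qed

lemma (in prob_space) bnd_integrable:
  fixes X :: "'a \<Rightarrow> real"
  assumes X: "X \<in> borel_measurable M" and B: "AE x in M. \<bar>X x\<bar> \<le> B"
    and a: "0 \<le> \<alpha>" "\<alpha> \<le> 1"
  shows "integrable M (\<lambda>x. hh \<alpha> (X x - y))"
    "integrable M (\<lambda>x. (neg_part (X x - y))\<^sup>2)"
    "integrable M (\<lambda>x. (pos_part (X x - y))\<^sup>2)"
proof -
  show "integrable M (\<lambda>x. hh \<alpha> (X x - y))"
  proof (rule integrable_const_bound[where B="B + \<bar>y\<bar>"])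
    show "AE x in M. norm (hh \<alpha> (X x - y)) \<le> B + \<bar>y\<bar>"
      using B proof eventually_elim
      case (elim x)
      then show ?case using hh_abs[OF a, of "X x - y"] by simp
    qed
    show "(\<lambda>x. hh \<alpha> (X x - y)) \<in> borel_measurable M"
      unfolding hh_def neg_part_def pos_part_def using X by measurable
  qed
  show "integrable M (\<lambda>x. (neg_part (X x - y))\<^sup>2)"
  proof (rule integrable_const_bound[where B="(B + \<bar>y\<bar>)\<^sup>2"])
    show "AE x in M. norm ((neg_part (X x - y))\<^sup>2) \<le> (B + \<bar>y\<bar>)\<^sup>2"
      using B proof eventually_elim
      case (elim x)
      have "\<bar>neg_part (X x - y)\<bar> \<le> B + \<bar>y\<bar>" using elim by (simp add: neg_part_def)
      then have "\<bar>neg_part (X x - y)\<bar>\<^sup>2 \<le> (B + \<bar>y\<bar>)\<^sup>2" by (intro power_mono) auto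
      then show ?case by simp
    qed
    show "(\<lambda>x. (neg_part (X x - y))\<^sup>2) \<in> borel_measurable M"
      unfolding neg_part_def using X by measurable
  qed
  show "integrable M (\<lambda>x. (pos_part (X x - y))\<^sup>2)"
  proof (rule integrable_const_bound[where B="(B + \<bar>y\<bar>)\<^sup>2"])
    show "AE x in M. norm ((pos_part (X x - y))\<^sup>2) \<le> (B + \<bar>y\<bar>)\<^sup>2"
      using B proof eventually_elim
      case (elim x)
      have "\<bar>pos_part (X x - y)\<bar> \<le> B + \<bar>y\<bar>" using elim by (simp add: pos_part_def)
      then have "\<bar>pos_part (X x - y)\<bar>\<^sup>2 \<le> (B + \<bar>y\<bar>)\<^sup>2" by (intro power_mono) auto
      then show ?case by simp
    qed
    show "(\<lambda>x. (pos_part (X x - y))\<^sup>2) \<in> borel_measurable M"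
      unfolding pos_part_def using X by measurable
  qed
qed

lemma (in prob_space) root_exists:
  fixes X :: "'a \<Rightarrow> real"
  assumes X: "X \<in> borel_measurable M" and B: "AE x in M. \<bar>X x\<bar> \<le> B"
    and a: "0 \<le> \<alpha>" "\<alpha> \<le> 1"
  shows "\<exists>e. (\<integral>x. hh \<alpha> (X x - e) \<partial>M) = 0"
proof -
  let ?f = "\<lambda>y. (\<integral>x. hh \<alpha> (X x - y) \<partial>M)"
  note I = bnd_integrable(1)[OF X B a]
  have B': "AE x in M. \<bar>X x\<bar> \<le> \<bar>B\<bar>" using B by eventually_elim auto
  have h0: "hh \<alpha> 0 = 0" by (simp add: hh_def neg_part_def pos_part_def)
  have f1: "?f \<bar>B\<bar> \<le> 0"
  proof -
    have "?f \<bar>B\<bar> \<le> (\<integral>x. 0 \<partial>M)"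
      using B' by (intro integral_mono_AE I) (auto elim!: eventually_mono intro!: order.trans[OF hh_mono[OF a] eq_refl[OF h0]])
    then show ?thesis by simp
  qed
  have f2: "0 \<le> ?f (- \<bar>B\<bar>)"
  proof -
    have "(\<integral>x. 0 \<partial>M) \<le> ?f (- \<bar>B\<bar>)"
      using B' by (intro integral_mono_AE I) (auto elim!: eventually_mono intro!: order.trans[OF eq_refl[OF h0[symmetric]] hh_mono[OF a]])
    then show ?thesis by simp
  qed
  have lip: "1-lipschitz_on {- \<bar>B\<bar>..\<bar>B\<bar>} ?f"
  proof (rule lipschitz_onI)
    have *: "dist (?f u) (?f v) \<le> dist u v" if "u \<le> v" for u v
    proof -
      have m: "?f v \<le> ?f u"
        using that by (intro integral_mono I) (auto intro!: hh_mono[OF a])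
      have "?f u + (-(v - u)) \<le> ?f v"
      proof (rule int_shift[OF I I])
        fix x show "hh \<alpha> (X x - u) + - (v - u) \<le> hh \<alpha> (X x - v)"
          using hh_lip[OF a, of "v - u" "X x - v"] that by simp
      qed
      then show ?thesis using m by (simp add: dist_real_def)
    qed
    fix u v show "dist (?f u) (?f v) \<le> 1 * dist u v"
      using *[of u v] *[of v u] by (cases "u \<le> v") (auto simp: dist_commute)
  qed simp
  have "continuous_on {- \<bar>B\<bar>..\<bar>B\<bar>} ?f" by (rule lipschitz_on_continuous_on[OF lip])
  from IVT2'[of ?f, OF f1 f2 _ this] show ?thesis by auto
qed


lemma (in prob_space) expectile_root:
  fixes X :: "'a \<Rightarrow> real"
  assumes X: "X \<in> borel_measurable M" and B: "AE x in M. \<bar>X x\<bar> \<le> B"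
    and a: "0 < \<alpha>" "\<alpha> < 1" and e: "(\<integral>x. hh \<alpha> (X x - e) \<partial>M) = 0"
  shows "expectile \<alpha> M X = e"
proof -
  have a': "0 \<le> \<alpha>" "\<alpha> \<le> 1" using a by auto
  note I = bnd_integrable[OF X B a']
  have Iphi: "integrable M (\<lambda>x. phi \<alpha> (X x - y))" for y
    unfolding phi_def using I by simp
  have L: "expectile_loss \<alpha> M X y = (\<integral>x. phi \<alpha> (X x - y) \<partial>M)" for y
    unfolding phi_def expectile_loss_def
    using I by (simp add: integral_add)
  let ?m = "min \<alpha> (1-\<alpha>)"
  have mpos: "0 < ?m" using a by simp
  have key: "expectile_loss \<alpha> M X e + ?m * (z - e)\<^sup>2 \<le> expectile_loss \<alpha> M X z" for z
  proof -
    let ?d = "z - e"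
    have "(\<integral>x. phi \<alpha> (X x - e) - 2 * ?d * hh \<alpha> (X x - e) \<partial>M) + ?m * ?d\<^sup>2
          \<le> (\<integral>x. phi \<alpha> (X x - z) \<partial>M)"
    proof (rule int_shift)
      show "integrable M (\<lambda>x. phi \<alpha> (X x - e) - 2 * ?d * hh \<alpha> (X x - e))"
        using Iphi I by simp
      show "integrable M (\<lambda>x. phi \<alpha> (X x - z))" by (rule Iphi)
      fix x show "phi \<alpha> (X x - e) - 2 * ?d * hh \<alpha> (X x - e) + ?m * ?d\<^sup>2 \<le> phi \<alpha> (X x - z)"
        using phi_convex[OF a', of "X x - e" ?d] by simp
    qed
    moreover have "(\<integral>x. phi \<alpha> (X x - e) - 2 * ?d * hh \<alpha> (X x - e) \<partial>M) = (\<integral>x. phi \<alpha> (X x - e) \<partial>M)"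
      using e Iphi I by (simp add: integral_diff)
    ultimately show ?thesis by (simp add: L)
  qed
  show ?thesis
    unfolding expectile_def
  proof (rule the_equality)
    show "\<forall>z. expectile_loss \<alpha> M X e \<le> expectile_loss \<alpha> M X z"
      using key mpos by (smt (verit) mult_nonneg_nonneg zero_le_power2)
  next
    fix y assume "\<forall>z. expectile_loss \<alpha> M X y \<le> expectile_loss \<alpha> M X z"
    then have "expectile_loss \<alpha> M X y \<le> expectile_loss \<alpha> M X e" by blast
    with key[of y] have "?m * (y - e)\<^sup>2 \<le> 0" by linarith
    with mpos have "(y - e)\<^sup>2 \<le> 0" by (metis less_le_not_le mult_le_0_iff zero_le_power2)
    then show "y = e" by simp
  qed
qed


theorem lemma10:
  fixes P :: "'s::finite \<Rightarrow> 'a::finite \<Rightarrow> (real \<times> 's) measure"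
    and Q :: "'s \<Rightarrow> 'a \<Rightarrow> real"
    and \<gamma> \<alpha> \<zeta> :: real
  assumes "0 < \<gamma>" "\<gamma> < 1" "0 < \<alpha>" "\<alpha> < 1" "0 < \<zeta>"
    and "\<And>s a. prob_space (P s a)"
    and "\<And>s a. sets (P s a) = sets (borel \<Otimes>\<^sub>M count_space UNIV)"
    and "\<exists>B. \<forall>s a. AE x in P s a. \<bar>fst x\<bar> \<le> B"
    and "\<And>s a. Q s a = expectile \<alpha> (P s a) (\<lambda>(r, s'). r + \<gamma> * (MAX a'. Q s' a'))"
  shows "Tstar \<zeta> \<alpha> \<gamma> P (\<lambda>s. MAX a. Q s a) = (\<lambda>s. MAX a. Q s a)
    \<and> (\<forall>V. Tstar \<zeta> \<alpha> \<gamma> P V = V \<longrightarrow> V = (\<lambda>s. MAX a. Q s a))"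
proof -
  note ps = assms(6)
  have a': "0 \<le> \<alpha>" "\<alpha> \<le> 1" using assms by auto
  obtain B where B: "\<And>s a. AE x in P s a. \<bar>fst x\<bar> \<le> B" using assms(8) by blast
  define XV where "XV V = (\<lambda>x::real \<times> 's. fst x + \<gamma> * V (snd x))" for V :: "'s \<Rightarrow> real"
  define Gf where "Gf V s a = (\<integral>x. hh \<alpha> (XV V x - V s) \<partial>P s a)" for V s a
  have meas: "XV V \<in> borel_measurable (P s a)" for V s a
  proof -
    have "XV V \<in> borel_measurable (borel \<Otimes>\<^sub>M count_space UNIV)"
      unfolding XV_def by measurable
    then show ?thesis using measurable_cong_sets[OF assms(7)[of s a], of borel borel] by (metis (no_types))
  qed
  have bnd: "AE x in P s a. \<bar>XV V x\<bar> \<le> B + \<gamma> * Max (range (\<lambda>s. \<bar>V s\<bar>))" for V s a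
    using B[of s a]
  proof eventually_elim
    case (elim x)
    have "\<bar>V (snd x)\<bar> \<le> Max (range (\<lambda>s. \<bar>V s\<bar>))" by (rule Max_ge) auto
    then have "\<gamma> * \<bar>V (snd x)\<bar> \<le> \<gamma> * Max (range (\<lambda>s. \<bar>V s\<bar>))"
      using assms(1) by (intro mult_left_mono) auto
    moreover have "\<bar>\<gamma> * V (snd x)\<bar> = \<gamma> * \<bar>V (snd x)\<bar>" using assms(1) by (simp add: abs_mult)
    moreover have "\<bar>fst x + \<gamma> * V (snd x)\<bar> \<le> \<bar>fst x\<bar> + \<bar>\<gamma> * V (snd x)\<bar>" by (rule abs_triangle_ineq)
    ultimately show ?case using elim unfolding XV_def by linarith
  qed
  note I = prob_space.bnd_integrable(1)[OF ps meas bnd a']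
  have Tform: "Tstar \<zeta> \<alpha> \<gamma> P V s = V s + (MAX a. 2 * \<zeta> * Gf V s a)" for V s
    unfolding Tstar_def Gf_def XV_def hh_def case_prod_beta by simp
  have fixchar: "(\<forall>s a. Gf V s a \<le> 0) \<and> (\<forall>s. \<exists>a. Gf V s a = 0)" if "Tstar \<zeta> \<alpha> \<gamma> P V = V" for V
  proof -
    have M0: "(MAX a. 2 * \<zeta> * Gf V s a) = 0" for s
      using Tform[of V s] that by (metis add_cancel_right_right)
    have "Gf V s a \<le> 0" for s a
    proof -
      have "2 * \<zeta> * Gf V s a \<le> (MAX a. 2 * \<zeta> * Gf V s a)" by (rule Max_ge) auto
      then show ?thesis using M0[of s] assms(5) by (simp add: mult_le_0_iff)
    qed
    moreover have "\<exists>a. Gf V s a = 0" for s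
    proof -
      have "(MAX a. 2 * \<zeta> * Gf V s a) \<in> range (\<lambda>a. 2 * \<zeta> * Gf V s a)" by (rule Max_in) auto
      then show ?thesis using M0[of s] assms(5) by auto
    qed
    ultimately show ?thesis by blast
  qed
  have cmp: "V s \<le> W s"
    if V: "(\<forall>s a. Gf V s a \<le> 0) \<and> (\<forall>s. \<exists>a. Gf V s a = 0)"
      and W: "(\<forall>s a. Gf W s a \<le> 0) \<and> (\<forall>s. \<exists>a. Gf W s a = 0)" for V W s
  proof (rule ccontr)
    assume "\<not> V s \<le> W s"
    have "Max (range (\<lambda>s. V s - W s)) \<in> range (\<lambda>s. V s - W s)" by (rule Max_in) auto
    then obtain s0 where s0: "Max (range (\<lambda>s. V s - W s)) = V s0 - W s0" by (metis (no_types, lifting) imageE)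
    have dmax: "V s' - W s' \<le> V s0 - W s0" for s'
      unfolding s0[symmetric] by (rule Max_ge) auto
    define d where "d = V s0 - W s0"
    have dpos: "0 < d" using dmax[of s] \<open>\<not> V s \<le> W s\<close> unfolding d_def by linarith
    obtain a where a: "Gf V s0 a = 0" using V by blast
    have Wle: "Gf W s0 a \<le> 0" using W by blast
    let ?m = "min \<alpha> (1-\<alpha>)"
    have "Gf V s0 a + ?m * ((1-\<gamma>)*d) \<le> Gf W s0 a"
      unfolding Gf_def
    proof (rule prob_space.int_shift[OF ps I I])
      fix x
      let ?t = "XV V x - V s0" and ?u = "XV W x - W s0"
      have c0: "0 \<le> (1-\<gamma>)*d" using dpos assms(2) by simp
      have "\<gamma> * (V (snd x) - W (snd x)) \<le> \<gamma> * d"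
        using dmax[of "snd x"] assms(1) unfolding d_def by (intro mult_left_mono) auto
      then have tu: "?t + (1-\<gamma>)*d \<le> ?u" unfolding XV_def d_def by (simp add: algebra_simps)
      have "hh \<alpha> ?t + ?m * ((1-\<gamma>)*d) \<le> hh \<alpha> (?t + (1-\<gamma>)*d)" by (rule hh_shift[OF a' c0])
      also have "\<dots> \<le> hh \<alpha> ?u" by (rule hh_mono[OF a' tu])
      finally show "hh \<alpha> ?t + ?m * ((1-\<gamma>)*d) \<le> hh \<alpha> ?u" .
    qed
    moreover have "0 < ?m * ((1-\<gamma>)*d)" using assms dpos by simp
    ultimately show False using a Wle by linarith
  qed
  define Vs where "Vs = (\<lambda>s. MAX a. Q s a)"
  have Qroot: "(\<integral>x. hh \<alpha> (XV Vs x - Q s a) \<partial>P s a) = 0" for s a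
  proof -
    obtain e where e: "(\<integral>x. hh \<alpha> (XV Vs x - e) \<partial>P s a) = 0"
      using prob_space.root_exists[OF ps meas bnd a'] by blast
    have "expectile \<alpha> (P s a) (XV Vs) = e"
      by (rule prob_space.expectile_root[OF ps meas bnd assms(3,4) e])
    moreover have "Q s a = expectile \<alpha> (P s a) (XV Vs)"
      using assms(9)[of s a] unfolding XV_def Vs_def case_prod_beta by simp
    ultimately show ?thesis using e by simp
  qed
  have Vschar: "(\<forall>s a. Gf Vs s a \<le> 0) \<and> (\<forall>s. \<exists>a. Gf Vs s a = 0)"
  proof (intro conjI allI)
    fix s a
    have "Q s a \<le> Vs s" unfolding Vs_def by (rule Max_ge) auto
    then have "Gf Vs s a \<le> (\<integral>x. hh \<alpha> (XV Vs x - Q s a) \<partial>P s a)"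
      unfolding Gf_def by (intro integral_mono I) (auto intro!: hh_mono[OF a'])
    then show "Gf Vs s a \<le> 0" using Qroot by simp
  next
    fix s
    have "Vs s \<in> range (Q s)" unfolding Vs_def by (rule Max_in) auto
    then obtain a where "Vs s = Q s a" by auto
    then show "\<exists>a. Gf Vs s a = 0" using Qroot[of s a] unfolding Gf_def by auto
  qed
  have part1: "Tstar \<zeta> \<alpha> \<gamma> P Vs = Vs"
  proof
    fix s
    have "(MAX a. 2 * \<zeta> * Gf Vs s a) = 0"
    proof (rule Max_eqI)
      show "y \<le> 0" if "y \<in> range (\<lambda>a. 2 * \<zeta> * Gf Vs s a)" for y
        using that Vschar assms(5) by (auto simp: mult_le_0_iff)
      obtain a where "Gf Vs s a = 0" using Vschar by blast
      then show "0 \<in> range (\<lambda>a. 2 * \<zeta> * Gf Vs s a)" by (metis mult_zero_right rangeI)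
    qed auto
    then show "Tstar \<zeta> \<alpha> \<gamma> P Vs s = Vs s" by (simp add: Tform)
  qed
  have part2: "V = Vs" if "Tstar \<zeta> \<alpha> \<gamma> P V = V" for V
  proof
    fix s
    show "V s = Vs s" using cmp[OF fixchar[OF that] Vschar, of s] cmp[OF Vschar fixchar[OF that], of s] by simp
  qed
  show ?thesis using part1 part2 unfolding Vs_def by blast
qed

end
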